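(* Let $n\geq 1$ and $s\geq 1$ be integers. Let $G$ be a connected graph on $n+s$ vertices and let $S\subseteq V(G)$ with $|S|=s$. Suppose that every non-terminal level with respect to $S$ contains at least $2$ vertices. Then \[ \sigma(S)\leq \begin{cases} \frac{1}{4}(n^2+2n), & \text{if } 2\mid n,\\[2pt] \frac{1}{4}(n^2+2n+1), & \text{if } 2\nmid n. \end{cases} \]
   Context: For a connected graph $G$ and $\emptyset\neq S\subseteq V(G)$, $d_G(S,u)=\min\{d_G(u,v): v\in S\}$, and the status of $S$ is $\sigma(S)=\sigma_G(S)=\sum_{u\in V(G)} d_G(S,u)$. For $i\geq 1$, the $i$-th level with respect to $S$ is the set of vertices $u$ with $d_G(S,u)=i$. The terminal level is the nonempty level with the largest index $i$; the non-terminal levels are all levels $1,\dots,r$ preceding the terminal level $r+1$ (all of which are nonempty by connectivity). *)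

theory Defs
  imports Complex_Main
begin

definition simple_graph :: "'a set \<Rightarrow> ('a \<Rightarrow> 'a \<Rightarrow> bool) \<Rightarrow> bool" where
  "simple_graph V E \<longleftrightarrow> finite V \<and> (\<forall>x y. E x y \<longrightarrow> x \<in> V \<and> y \<in> V)
     \<and> (\<forall>x y. E x y \<longrightarrow> E y x) \<and> (\<forall>x. \<not> E x x)"

inductive walk_len :: "('a \<Rightarrow> 'a \<Rightarrow> bool) \<Rightarrow> 'a \<Rightarrow> 'a \<Rightarrow> nat \<Rightarrow> bool" for E where
  nil: "walk_len E u u 0"
| cons: "E u v \<Longrightarrow> walk_len E v w k \<Longrightarrow> walk_len E u w (Suc k)"

definition connected_graph :: "'a set \<Rightarrow> ('a \<Rightarrow> 'a \<Rightarrow> bool) \<Rightarrow> bool" where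
  "connected_graph V E \<longleftrightarrow> simple_graph V E \<and> V \<noteq> {} \<and> (\<forall>u\<in>V. \<forall>v\<in>V. \<exists>k. walk_len E u v k)"

definition gdist :: "('a \<Rightarrow> 'a \<Rightarrow> bool) \<Rightarrow> 'a \<Rightarrow> 'a \<Rightarrow> nat" where
  "gdist E u v = (LEAST k. walk_len E u v k)"

definition setdist :: "('a \<Rightarrow> 'a \<Rightarrow> bool) \<Rightarrow> 'a set \<Rightarrow> 'a \<Rightarrow> nat" where
  "setdist E S u = Min ((\<lambda>v. gdist E u v) ` S)"

definition status :: "'a set \<Rightarrow> ('a \<Rightarrow> 'a \<Rightarrow> bool) \<Rightarrow> 'a set \<Rightarrow> nat" where
  "status V E S = (\<Sum>u\<in>V. setdist E S u)"

definition level :: "'a set \<Rightarrow> ('a \<Rightarrow> 'a \<Rightarrow> bool) \<Rightarrow> 'a set \<Rightarrow> nat \<Rightarrow> 'a set" where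
  "level V E S i = {u \<in> V. setdist E S u = i}"

definition terminal_index :: "'a set \<Rightarrow> ('a \<Rightarrow> 'a \<Rightarrow> bool) \<Rightarrow> 'a set \<Rightarrow> nat" where
  "terminal_index V E S = Max ((\<lambda>u. setdist E S u) ` V)"

end

theory Submission
  imports Defs
begin

lemma tri_sum: "(\<Sum>i\<in>{1..<t}. 2 * (t - i)) = t * (t - 1::nat)"
proof (induction t)
  case 0 then show ?case by simp
next
  case (Suc t)
  have "(\<Sum>i\<in>{1..<Suc t}. 2 * (Suc t - i)) = (\<Sum>i\<in>{1..<Suc t}. 2 * (t - i) + 2)"
    by (rule sum.cong) auto
  also have "\<dots> = (\<Sum>i\<in>{1..<Suc t}. 2 * (t - i)) + 2 * t"
    by (simp only: sum.distrib sum_constant card_atLeastLessThan) simp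
  also have "(\<Sum>i\<in>{1..<Suc t}. 2 * (t - i)) = (\<Sum>i\<in>{1..<t}. 2 * (t - i))"
    by (cases t) (auto simp: sum.atLeastLessThan_Suc)
  finally show ?case using Suc by (cases t) (auto simp: algebra_simps)
qed

lemma comb:
  fixes f :: "'a \<Rightarrow> nat"
  assumes fin: "finite A" and le: "\<forall>u\<in>A. f u \<le> t"
    and two: "\<forall>i. 1 \<le> i \<and> i < t \<longrightarrow> card {u\<in>A. f u = i} \<ge> 2"
  shows "sum f A + t * (t - 1) \<le> t * card A"
proof -
  define B where "B = {u\<in>A. 1 \<le> f u \<and> f u < t}"
  have finB: "finite B" using fin by (simp add: B_def)
  have "sum (\<lambda>u. t - f u) B \<le> sum (\<lambda>u. t - f u) A"
    by (rule sum_mono2) (auto simp: fin B_def)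
  have img: "f ` B = {1..<t}"
  proof
    show "f ` B \<subseteq> {1..<t}" by (auto simp: B_def)
    show "{1..<t} \<subseteq> f ` B"
    proof
      fix i assume i: "i \<in> {1..<t}"
      then have "card {u\<in>A. f u = i} \<ge> 2" using two by auto
      then have "{u\<in>A. f u = i} \<noteq> {}" by (metis card.empty not_numeral_le_zero)
      then obtain u where "u \<in> A" "f u = i" by auto
      then show "i \<in> f ` B" using i by (auto simp: B_def)
    qed
  qed
  have "sum (\<lambda>u. t - f u) B = (\<Sum>i\<in>f ` B. sum (\<lambda>u. t - f u) {u\<in>B. f u = i})"
    by (rule sum.image_gen[OF finB])
  also have "\<dots> = (\<Sum>i\<in>{1..<t}. card {u\<in>A. f u = i} * (t - i))"
  proof (unfold img, rule sum.cong)
    fix i assume i: "i \<in> {1..<t}"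
    have "{u\<in>B. f u = i} = {u\<in>A. f u = i}" using i by (auto simp: B_def)
    then have "sum (\<lambda>u. t - f u) {u\<in>B. f u = i} = sum (\<lambda>u. t - i) {u\<in>A. f u = i}"
      by simp
    then show "sum (\<lambda>u. t - f u) {u\<in>B. f u = i} = card {u\<in>A. f u = i} * (t - i)" by simp
  qed simp
  also have "\<dots> \<ge> (\<Sum>i\<in>{1..<t}. 2 * (t - i))"
    by (rule sum_mono) (use two in auto)
  finally have "t * (t - 1) \<le> sum (\<lambda>u. t - f u) A"
    using tri_sum[of t] \<open>sum (\<lambda>u. t - f u) B \<le> sum (\<lambda>u. t - f u) A\<close> by linarith
  moreover have "sum f A + sum (\<lambda>u. t - f u) A = t * card A"
  proof -
    have "sum f A + sum (\<lambda>u. t - f u) A = sum (\<lambda>u. f u + (t - f u)) A" by (simp add: sum.distrib)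
    also have "\<dots> = sum (\<lambda>u. t) A" using le by (intro sum.cong) auto
    finally show ?thesis by simp
  qed
  ultimately show ?thesis by linarith
qed

lemma final_ineq:
  fixes n t sg :: nat
  assumes "sg + t * (t - 1) \<le> t * n"
  shows "real sg \<le>
           (if even n then (real n ^ 2 + 2 * real n) / 4 else (real n ^ 2 + 2 * real n + 1) / 4)"
proof -
  have h: "int sg \<le> int t * int n - int t * (int t - 1)"
  proof (cases t)
    case 0 then show ?thesis using assms by simp
  next
    case (Suc m) then show ?thesis using assms by (simp add: of_nat_diff algebra_simps)
      (metis (no_types) add_le_imp_le_diff of_nat_add of_nat_le_iff of_nat_mult)
  qed
  have e: "4 * int sg \<le> (int n + 1)^2 - (int n + 1 - 2 * int t)^2"
    using h by (simp add: power2_eq_square algebra_simps)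
  show ?thesis
  proof (cases "even n")
    case True
    then have "odd (int n + 1 - 2 * int t)" by simp
    then have "(int n + 1 - 2 * int t) \<noteq> 0" by (metis even_zero)
    then have a: "\<bar>int n + 1 - 2 * int t\<bar> \<ge> 1" by linarith
    have "(int n + 1 - 2 * int t)^2 = \<bar>int n + 1 - 2 * int t\<bar> * \<bar>int n + 1 - 2 * int t\<bar>"
      by (simp add: power2_eq_square)
    also have "\<dots> \<ge> 1 * 1" using a by (intro mult_mono) auto
    finally have "(int n + 1 - 2 * int t)^2 \<ge> 1" by simp
    then have "4 * int sg \<le> int n ^ 2 + 2 * int n" using e by (simp add: power2_eq_square algebra_simps)
    then have "4 * real sg \<le> real n ^ 2 + 2 * real n"
      by (metis (mono_tags) of_int_le_iff of_int_of_nat_eq of_int_add of_int_mult of_int_power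
          of_int_numeral)
    then show ?thesis using True by simp
  next
    case False
    have "4 * int sg \<le> (int n + 1)^2" using e by (smt (verit) zero_le_power2)
    then have "4 * int sg \<le> int n ^ 2 + 2 * int n + 1" by (simp add: power2_eq_square algebra_simps)
    then have "4 * real sg \<le> real n ^ 2 + 2 * real n + 1"
      by (metis (mono_tags) of_int_le_iff of_int_of_nat_eq of_int_add of_int_mult of_int_power
          of_int_numeral of_int_1)
    then show ?thesis using False by simp
  qed
qed

theorem lemma6:
  fixes V :: "'a set" and E :: "'a \<Rightarrow> 'a \<Rightarrow> bool" and S :: "'a set" and n s :: nat
  assumes "n \<ge> 1" and "s \<ge> 1"
    and "connected_graph V E" and "card V = n + s"
    and "S \<subseteq> V" and "card S = s"
    and "\<forall>i. 1 \<le> i \<and> i < terminal_index V E S \<longrightarrow> card (level V E S i) \<ge> 2"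
  shows "real (status V E S) \<le>
           (if even n then (real n ^ 2 + 2 * real n) / 4 else (real n ^ 2 + 2 * real n + 1) / 4)"
proof -
  define t where "t = terminal_index V E S"
  define d where "d = setdist E S"
  have finV: "finite V" using assms(3) by (simp add: connected_graph_def simple_graph_def)
  have finS: "finite S" using finV assms(5) finite_subset by blast
  have S0: "d u = 0" if "u \<in> S" for u
  proof -
    have g: "gdist E u u = 0" unfolding gdist_def by (simp add: walk_len.nil)
    have "d u \<le> gdist E u u" unfolding d_def setdist_def
      by (rule Min_le) (use finS that in auto)
    then show ?thesis using g by simp
  qed
  have Vt: "d u \<le> t" if "u \<in> V" for u
    unfolding d_def t_def terminal_index_def by (rule Max_ge) (use finV that in auto)
  have "status V E S = sum d V" by (simp add: status_def d_def)
  also have "\<dots> = sum d (V - S) + sum d S"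
    using finV assms(5) by (metis sum.subset_diff)
  also have "sum d S = 0" using S0 by simp
  finally have st: "status V E S = sum d (V - S)" by simp
  have cVS: "card (V - S) = n" using assms(4,5,6) finS by (simp add: card_Diff_subset)
  have lv: "{u\<in>V - S. d u = i} = level V E S i" if "1 \<le> i" for i
    using S0 that by (auto simp: level_def d_def)
  have "sum d (V - S) + t * (t - 1) \<le> t * card (V - S)"
    by (rule comb) (use finV Vt lv assms(7) in \<open>auto simp: t_def\<close>)
  then show ?thesis using final_ineq st cVS by metis
qed

end
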